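(* Let $N\geq 1$ be an integer and $\delta>0$. There is a constant $B=B(N,\delta)$ such that the following holds: if $q(x)=\prod_{i=1}^N(x-\mu_i)\in\mathbb{R}[x]$ is a monic reciprocal polynomial of degree $N$ whose roots $\mu=(\mu_1,\dots,\mu_N)$ satisfy $p_k(\mu)\leq\delta$ for all $1\leq k\leq N(N+1)$, then every coefficient of $q$ has absolute value at most $B$.
   Context: $p_k(\mu)=\sum_{i=1}^N\mu_i^k$ is the $k$-th power sum of the roots (a real number since $q$ has real coefficients). A polynomial $q$ of degree $N$ is reciprocal if $x^Nq(1/x)=\pm q(x)$, i.e. its coefficient sequence is palindromic up to sign. *)

theory Defs
  imports Complex_Main "HOL-Computational_Algebra.Polynomial"
begin

text \<open>A polynomial q of degree N is reciprocal if x^N q(1/x) = +q(x) or -q(x),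
  i.e. its coefficient sequence (of length N+1) is palindromic up to sign.\<close>
definition reciprocal_poly :: "real poly \<Rightarrow> bool" where
  "reciprocal_poly q \<longleftrightarrow>
     (\<forall>i\<le>degree q. coeff q (degree q - i) = coeff q i) \<or>
     (\<forall>i\<le>degree q. coeff q (degree q - i) = - coeff q i)"

definition power_sum :: "nat \<Rightarrow> (nat \<Rightarrow> complex) \<Rightarrow> nat \<Rightarrow> complex" where
  "power_sum N \<mu> k = (\<Sum>i<N. \<mu> i ^ k)"

end

theory Submission
  imports Defs
begin

definition GG :: "nat \<Rightarrow> complex \<Rightarrow> complex" where
  "GG L z = (\<Sum>t\<le>L. z ^ t)"

definition VV :: "nat \<Rightarrow> complex \<Rightarrow> real" where
  "VV K z = (real K + 1) + 2 * (\<Sum>k\<in>{1..K}. (real K + 1 - real k) * Re (z ^ k))"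

lemma VV_sos:
  "VV K z = (cmod (GG K z))^2 + (1 - (cmod z)^2) * (\<Sum>L<K. (cmod (GG L z))^2)"
proof (induction K)
  case 0
  then show ?case by (simp add: VV_def GG_def)
next
  case (Suc K)
  have G: "GG (Suc K) z = 1 + z * GG K z"
    unfolding GG_def by (subst sum.atMost_Suc_shift) (simp add: sum_distrib_left)
  have zG: "z * GG K z = (\<Sum>k\<in>{1..Suc K}. z ^ k)"
  proof -
    have "z * GG K z = (\<Sum>t\<le>K. z ^ Suc t)"
      unfolding GG_def by (simp add: sum_distrib_left)
    also have "\<dots> = (\<Sum>k\<in>{Suc 0..Suc K}. z ^ k)"
      by (subst sum.shift_bounds_cl_Suc_ivl) (simp add: atMost_atLeast0)
    finally show ?thesis by simp
  qed
  have sq: "(cmod (1 + w))^2 = 1 + 2 * Re w + (cmod w)^2" for w :: complex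
    by (simp add: cmod_power2) (simp add: power2_eq_square algebra_simps)
  have A: "(\<Sum>k\<in>{1..Suc K}. (real (Suc K) + 1 - real k) * Re (z ^ k))
      = (\<Sum>k\<in>{1..Suc K}. (real K + 1 - real k) * Re (z ^ k)) + (\<Sum>k\<in>{1..Suc K}. Re (z ^ k))"
    by (simp add: sum.distrib[symmetric] algebra_simps)
  have B: "(\<Sum>k\<in>{1..Suc K}. (real K + 1 - real k) * Re (z ^ k))
      = (\<Sum>k\<in>{1..K}. (real K + 1 - real k) * Re (z ^ k))"
    by (simp add: sum.atLeast1_atMost_eq)
  have VS: "VV (Suc K) z = VV K z + 1 + 2 * Re (z * GG K z)"
    unfolding VV_def A B zG Re_sum by simp
  show ?case
    unfolding VS Suc G sq
    by (simp add: norm_mult power_mult_distrib algebra_simps)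
qed

lemma VV_nonneg: "cmod z \<le> 1 \<Longrightarrow> VV K z \<ge> 0"
proof -
  assume "cmod z \<le> 1"
  then have "(cmod z)^2 \<le> 1" by (simp add: power_le_one)
  then have "0 \<le> (1 - (cmod z)^2) * (\<Sum>L<K. (cmod (GG L z))^2)"
    by (intro mult_nonneg_nonneg sum_nonneg) auto
  then show ?thesis unfolding VV_sos by simp
qed

lemma VV_one: "VV K 1 = (real K + 1)^2"
proof -
  have "GG K 1 = of_nat (Suc K)" by (simp add: GG_def)
  then have "cmod (GG K 1) = real K + 1" by (simp only: norm_of_nat)
  then show ?thesis unfolding VV_sos by simp
qed

lemma VV_sum:
  assumes "finite A"
  shows "(\<Sum>a\<in>A. VV K (f a)) = real (card A) * (real K + 1)
     + 2 * (\<Sum>k\<in>{1..K}. (real K + 1 - real k) * Re (\<Sum>a\<in>A. f a ^ k))"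
  unfolding VV_def sum.distrib Re_sum
  by (simp add: sum_distrib_left sum_distrib_right sum.swap[of _ A] algebra_simps)


lemma caseA:
  fixes z :: "nat \<Rightarrow> complex" and N :: nat and \<eta> :: real
  assumes z: "\<forall>i<N. cmod (z i) \<le> 1" and i0: "i0 < N" "(z i0)^2 = 1"
    and T: "\<forall>m. 1 \<le> m \<and> m \<le> 2*N \<longrightarrow> Re (\<Sum>i<N. z i ^ m) \<le> \<eta>" and eta: "\<eta> \<ge> 0"
  shows "real N + 1 \<le> 2 * real N ^ 2 * \<eta>"
proof -
  let ?w = "\<lambda>i. z i ^ 2"
  have w1: "\<forall>i<N. cmod (?w i) \<le> 1" using z by (simp add: norm_power power_le_one)
  have "(real N + 1)^2 = VV N (?w i0)" using i0 VV_one by simp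
  also have "\<dots> \<le> (\<Sum>i<N. VV N (?w i))"
    by (rule member_le_sum) (use i0 w1 VV_nonneg in auto)
  also have "\<dots> = real N * (real N + 1) + 2 * (\<Sum>k\<in>{1..N}. (real N + 1 - real k) * Re (\<Sum>i<N. ?w i ^ k))"
    by (simp add: VV_sum)
  finally have 1: "(real N + 1)^2 \<le> real N * (real N + 1) + 2 * (\<Sum>k\<in>{1..N}. (real N + 1 - real k) * Re (\<Sum>i<N. ?w i ^ k))" .
  have 2: "(\<Sum>k\<in>{1..N}. (real N + 1 - real k) * Re (\<Sum>i<N. ?w i ^ k)) \<le> (\<Sum>k\<in>{1..N}. real N * \<eta>)"
  proof (rule sum_mono)
    fix k assume k: "k \<in> {1..N}"
    have "Re (\<Sum>i<N. z i ^ (2*k)) \<le> \<eta>" using T k by auto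
    then have "Re (\<Sum>i<N. ?w i ^ k) \<le> \<eta>" by (simp add: power_mult)
    then have "(real N + 1 - real k) * Re (\<Sum>i<N. ?w i ^ k) \<le> (real N + 1 - real k) * \<eta>"
      using k by (intro mult_left_mono) auto
    also have "\<dots> \<le> real N * \<eta>" using k eta by (intro mult_right_mono) auto
    finally show "(real N + 1 - real k) * Re (\<Sum>i<N. ?w i ^ k) \<le> real N * \<eta>" .
  qed
  have "(real N + 1)^2 \<le> real N * (real N + 1) + 2 * (real N * (real N * \<eta>))"
    using 1 2 by simp
  then show ?thesis by (simp add: power2_eq_square algebra_simps)
qed

lemma caseB:
  fixes z :: "nat \<Rightarrow> complex" and N K :: nat and \<eta> :: real
  assumes z: "\<forall>i<N. cmod (z i) \<le> 1" and ij: "i0 < N" "j0 < N" "i0 \<noteq> j0" "z i0 * z j0 = 1"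
    and T: "\<forall>m. 1 \<le> m \<and> m \<le> K \<longrightarrow> Re (\<Sum>i<N. z i ^ m) \<le> \<eta>" and eta: "\<eta> \<ge> 0"
  shows "2 * (real K + 1)^2 \<le> 2 * real N ^ 2 * (real K + 1) + 4 * real N * \<eta> * real K ^ 2"
proof -
  define TT where "TT k = (\<Sum>i<N. z i ^ k)" for k
  define W where "W k = real K + 1 - real k" for k
  let ?A = "{..<N} \<times> {..<N}"
  let ?f = "\<lambda>(i,l). z i * z l"
  have fA: "\<forall>a\<in>?A. cmod (?f a) \<le> 1"
    using z by (auto simp: norm_mult intro: mult_le_one)
  have prodsum: "(\<Sum>a\<in>?A. ?f a ^ k) = TT k * TT k" for k
    by (simp add: TT_def sum_product sum.cartesian_product power_mult_distrib case_prod_beta)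
  have "2 * (real K + 1)^2 = (\<Sum>a\<in>{(i0,j0),(j0,i0)}. VV K (?f a))"
    using ij by (simp add: VV_one mult.commute)
  also have "\<dots> \<le> (\<Sum>a\<in>?A. VV K (?f a))"
    by (rule sum_mono2) (use ij fA VV_nonneg in auto)
  also have "\<dots> = real N ^ 2 * (real K + 1) + 2 * (\<Sum>k\<in>{1..K}. W k * Re (TT k * TT k))"
    by (simp add: VV_sum prodsum W_def power2_eq_square)
  finally have Q: "2 * (real K + 1)^2 \<le> real N ^ 2 * (real K + 1) + 2 * (\<Sum>k\<in>{1..K}. W k * Re (TT k * TT k))" .
  have "0 \<le> (\<Sum>i<N. VV K (z i))" by (rule sum_nonneg) (use z VV_nonneg in auto)
  also have "\<dots> = real N * (real K + 1) + 2 * (\<Sum>k\<in>{1..K}. W k * Re (TT k))"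
    by (simp add: VV_sum W_def TT_def)
  finally have L: "0 \<le> real N * (real K + 1) + 2 * (\<Sum>k\<in>{1..K}. W k * Re (TT k))" .
  have pk: "W k * Re (TT k * TT k) \<le> real N * (2 * \<eta> * real K) - real N * (W k * Re (TT k))"
    if k: "k \<in> {1..K}" for k
  proof -
    define a where "a = Re (TT k)"
    have aeta: "a \<le> \<eta>" using T k by (auto simp: a_def TT_def)
    have "\<bar>a\<bar> \<le> cmod (TT k)" unfolding a_def by (rule abs_Re_le_cmod)
    also have "\<dots> \<le> (\<Sum>i<N. cmod (z i ^ k))" unfolding TT_def by (rule norm_sum)
    also have "\<dots> \<le> (\<Sum>i<N. 1)" by (rule sum_mono) (use z in \<open>auto simp: norm_power power_le_one\<close>)
    finally have aN: "\<bar>a\<bar> \<le> real N" by simp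
    have "Re (TT k * TT k) \<le> a * a" by (simp add: a_def)
    also have "a * a = \<bar>a\<bar> * \<bar>a\<bar>" by simp
    also have "\<dots> \<le> real N * \<bar>a\<bar>" using aN by (intro mult_right_mono) auto
    also have "\<dots> \<le> real N * (2 * \<eta> - a)" using aeta eta by (intro mult_left_mono) (auto simp: abs_if)
    finally have r: "Re (TT k * TT k) \<le> real N * (2 * \<eta> - a)" .
    have W0: "0 \<le> W k" "W k \<le> real K" using k by (auto simp: W_def)
    have "W k * Re (TT k * TT k) \<le> W k * (real N * (2 * \<eta> - a))"
      using r W0 by (intro mult_left_mono) auto
    also have "\<dots> = real N * (2 * \<eta>) * W k - real N * (W k * a)" by (simp add: algebra_simps)
    also have "\<dots> \<le> real N * (2 * \<eta>) * real K - real N * (W k * a)"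
      using W0 eta by (simp add: mult_left_mono)
    finally show ?thesis by (simp add: a_def algebra_simps)
  qed
  have "(\<Sum>k\<in>{1..K}. W k * Re (TT k * TT k)) \<le> (\<Sum>k\<in>{1..K}. real N * (2 * \<eta> * real K) - real N * (W k * Re (TT k)))"
    by (rule sum_mono) (rule pk)
  also have "\<dots> = real K * (real N * (2 * \<eta> * real K)) - real N * (\<Sum>k\<in>{1..K}. W k * Re (TT k))"
    by (simp add: sum_subtractf sum_distrib_left)
  finally have S: "(\<Sum>k\<in>{1..K}. W k * Re (TT k * TT k)) \<le> real K * (real N * (2 * \<eta> * real K)) - real N * (\<Sum>k\<in>{1..K}. W k * Re (TT k))" .
  have L2: "- real N * (\<Sum>k\<in>{1..K}. W k * Re (TT k)) \<le> real N * (real N * (real K + 1) / 2)"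
  proof -
    have "- (\<Sum>k\<in>{1..K}. W k * Re (TT k)) \<le> real N * (real K + 1) / 2" using L by linarith
    then have "real N * (- (\<Sum>k\<in>{1..K}. W k * Re (TT k))) \<le> real N * (real N * (real K + 1) / 2)"
      by (rule mult_left_mono) simp
    then show ?thesis by simp
  qed
  show ?thesis using Q S L2 by (simp add: power2_eq_square algebra_simps)
qed


lemma coeff_prod_bound:
  fixes a :: "nat \<Rightarrow> complex"
  assumes "finite A" "\<forall>i\<in>A. cmod (a i) \<le> \<rho>" "\<rho> \<ge> 0"
  shows "cmod (coeff (\<Prod>i\<in>A. [:-a i, 1:]) j) \<le> (1+\<rho>)^card A"
  using assms
proof (induction A arbitrary: j rule: finite_induct)
  case empty
  then show ?case by (simp add: coeff_1)
next
  case (insert x F)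
  define P where "P = (\<Prod>i\<in>F. [:-a i, 1:])"
  have IH: "cmod (coeff P m) \<le> (1+\<rho>)^card F" for m
    using insert by (simp add: P_def)
  have eq: "(\<Prod>i\<in>insert x F. [:-a i, 1:]) = smult (-a x) P + pCons 0 P"
    using insert by (simp add: P_def)
  have c: "cmod (coeff (pCons 0 P) j) \<le> (1+\<rho>)^card F"
    using IH insert.prems by (cases j) auto
  have "cmod (coeff (\<Prod>i\<in>insert x F. [:-a i, 1:]) j) \<le> cmod (a x) * cmod (coeff P j) + cmod (coeff (pCons 0 P) j)"
    unfolding eq by simp (rule order_trans[OF norm_triangle_ineq4], simp add: norm_mult)
  also have "\<dots> \<le> \<rho> * (1+\<rho>)^card F + (1+\<rho>)^card F"
    using insert IH c by (intro add_mono mult_mono) auto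
  also have "\<dots> = (1+\<rho>)^card (insert x F)" using insert by (simp add: algebra_simps)
  finally show ?case .
qed

lemma arithB:
  fixes n k \<eta> :: real
  assumes "n \<ge> 1" "k = n * (n+1)" "2 * n^2 * \<eta> < 1" "\<eta> \<ge> 0"
    "2 * (k+1)^2 \<le> 2 * n^2 * (k+1) + 4 * n * \<eta> * k^2"
  shows False
proof -
  have pos: "0 < 2 * (n+1)^2 * n" using assms(1) by simp
  have "4 * n * \<eta> * k^2 = (2 * (n+1)^2 * n) * (2 * n^2 * \<eta>)"
    using assms(2) by (simp add: power2_eq_square algebra_simps)
  also have "\<dots> < (2 * (n+1)^2 * n) * 1"
    using pos assms(3) by (intro mult_strict_left_mono) auto
  finally have "4 * n * \<eta> * k^2 < 2 * (n+1)^2 * n" by (simp only: mult_1_right)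
  then have "2 * (k+1)^2 < 2 * n^2 * (k+1) + 2 * (n+1)^2 * n" using assms(5) by linarith
  then show False using assms(1,2) by (simp add: power2_eq_square algebra_simps)
qed


lemma roots_bounded:
  fixes N :: nat and \<delta> :: real and q :: "real poly" and \<mu> :: "nat \<Rightarrow> complex"
  assumes N: "N \<ge> 1" and d: "\<delta> > 0"
    and P: "map_poly complex_of_real q = (\<Prod>i<N. [:- \<mu> i, 1:])"
    and T: "\<forall>k. 1 \<le> k \<and> k \<le> N * (N + 1) \<longrightarrow> Re (power_sum N \<mu> k) \<le> \<delta>"
  shows "\<forall>i<N. cmod (\<mu> i) \<le> max 1 (2 * real N ^ 2 * \<delta>)"
proof (rule ccontr)
  define \<rho> where "\<rho> = max 1 (2 * real N ^ 2 * \<delta>)"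
  assume "\<not> (\<forall>i<N. cmod (\<mu> i) \<le> max 1 (2 * real N ^ 2 * \<delta>))"
  then obtain i1 where i1: "i1 < N" "cmod (\<mu> i1) > \<rho>" by (auto simp: \<rho>_def not_le)
  define R where "R = Max ((\<lambda>i. cmod (\<mu> i)) ` {..<N})"
  have fin: "finite ((\<lambda>i. cmod (\<mu> i)) ` {..<N})" by simp
  have ne: "(\<lambda>i. cmod (\<mu> i)) ` {..<N} \<noteq> {}" using N by (auto simp: lessThan_empty_iff)
  obtain i0 where i0: "i0 < N" "cmod (\<mu> i0) = R"
    using Max_in[OF fin ne] unfolding R_def by auto
  have Rge: "cmod (\<mu> i) \<le> R" if "i < N" for i
    unfolding R_def using that by (intro Max_ge[OF fin]) auto
  have Rrho: "R > \<rho>" using Rge[OF i1(1)] i1(2) by simp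
  have R1: "R > 1" using Rrho by (simp add: \<rho>_def)
  have R2: "R > 2 * real N ^ 2 * \<delta>" using Rrho by (simp add: \<rho>_def)
  define z where "z i = \<mu> i / complex_of_real R" for i
  define \<eta> where "\<eta> = \<delta> / R"
  have eta0: "\<eta> \<ge> 0" using d R1 by (simp add: \<eta>_def)
  have eta1: "2 * real N ^ 2 * \<eta> < 1"
    using R2 R1 by (simp add: \<eta>_def field_simps)
  have z1: "\<forall>i<N. cmod (z i) \<le> 1"
    using Rge R1 by (simp add: z_def norm_divide)
  have zi0: "cmod (z i0) = 1" using i0 R1 by (simp add: z_def norm_divide)
  have Tz: "\<forall>m. 1 \<le> m \<and> m \<le> N * (N + 1) \<longrightarrow> Re (\<Sum>i<N. z i ^ m) \<le> \<eta>"
  proof (intro allI impI)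
    fix m assume m: "1 \<le> m \<and> m \<le> N * (N + 1)"
    have "(\<Sum>i<N. z i ^ m) = power_sum N \<mu> m / complex_of_real (R ^ m)"
      by (simp add: z_def power_sum_def power_divide sum_divide_distrib)
    then have "Re (\<Sum>i<N. z i ^ m) = Re (power_sum N \<mu> m) / R ^ m"
      by (simp add: Re_divide_of_real)
    also have "\<dots> \<le> \<delta> / R ^ m"
      using T m R1 by (intro divide_right_mono) auto
    also have "\<dots> \<le> \<delta> / R"
    proof -
      have "R \<le> R ^ m" using R1 m by (metis less_imp_le power_increasing power_one_right)
      then show ?thesis using d R1 by (intro divide_left_mono) auto
    qed
    finally show "Re (\<Sum>i<N. z i ^ m) \<le> \<eta>" by (simp add: \<eta>_def)
  qed
  have real_coeffs: "\<And>n. coeff (\<Prod>i<N. [:- \<mu> i, 1:]) n \<in> \<real>"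
    unfolding P[symmetric] by (simp add: coeff_map_poly)
  have "poly (\<Prod>i<N. [:- \<mu> i, 1:]) (\<mu> i0) = 0"
    using i0 by (auto simp: poly_prod intro!: bexI[of _ i0])
  then have "poly (\<Prod>i<N. [:- \<mu> i, 1:]) (cnj (\<mu> i0)) = 0"
    using real_poly_cnj_root_iff[OF real_coeffs] by blast
  then obtain j0 where j0: "j0 < N" "\<mu> j0 = cnj (\<mu> i0)"
    by (auto simp: poly_prod)
  have zj0: "z j0 = cnj (z i0)" using j0 by (simp add: z_def)
  have zz: "z i0 * cnj (z i0) = 1"
    using zi0 complex_norm_square[of "z i0"] by simp
  show False
  proof (cases "Im (z i0) = 0")
    case True
    then have "cnj (z i0) = z i0" by (simp add: complex_eq_iff)
    then have "(z i0)^2 = 1" using zz by (simp add: power2_eq_square)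
    moreover have "\<forall>m. 1 \<le> m \<and> m \<le> 2*N \<longrightarrow> Re (\<Sum>i<N. z i ^ m) \<le> \<eta>"
    proof (intro allI impI)
      fix m assume "1 \<le> m \<and> m \<le> 2*N"
      moreover have "2 * N \<le> N * (N+1)" using N by (simp add: algebra_simps)
      ultimately have "1 \<le> m \<and> m \<le> N * (N+1)" by linarith
      then show "Re (\<Sum>i<N. z i ^ m) \<le> \<eta>" using Tz by blast
    qed
    ultimately have "real N + 1 \<le> 2 * real N ^ 2 * \<eta>"
      using caseA[OF z1 i0(1)] eta0 by blast
    then show False using eta1 by simp
  next
    case False
    then have "cnj (z i0) \<noteq> z i0" by (metis cnj.simps(2) neg_equal_zero)
    then have "j0 \<noteq> i0" using zj0 by auto
    moreover have "z i0 * z j0 = 1" using zz zj0 by simp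
    ultimately have "2 * (real (N * (N + 1)) + 1)^2 \<le> 2 * real N ^ 2 * (real (N * (N + 1)) + 1)
        + 4 * real N * \<eta> * real (N * (N + 1)) ^ 2"
      using caseB[OF z1 i0(1) j0(1), of "N * (N+1)" \<eta>] Tz eta0 by blast
    moreover have "real (N*(N+1)) = real N * (real N + 1)" by (simp add: algebra_simps)
    moreover have "real N \<ge> 1" using N by simp
    ultimately show False
      using arithB[of "real N" "real (N * (N + 1))" \<eta>] eta1 eta0 by blast
  qed
qed

theorem lemma2p2:
  fixes N :: nat and \<delta> :: real
  assumes "N \<ge> 1" and "\<delta> > 0"
  shows "\<exists>B::real. \<forall>(q::real poly) (\<mu>::nat \<Rightarrow> complex).
           lead_coeff q = 1 \<longrightarrow> degree q = N \<longrightarrow> reciprocal_poly q \<longrightarrow>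
           map_poly complex_of_real q = (\<Prod>i<N. [:- \<mu> i, 1:]) \<longrightarrow>
           (\<forall>k. 1 \<le> k \<and> k \<le> N * (N + 1) \<longrightarrow>
              Re (power_sum N \<mu> k) \<le> \<delta>) \<longrightarrow>
           (\<forall>i. \<bar>coeff q i\<bar> \<le> B)"
proof (intro exI allI impI)
  fix q :: "real poly" and \<mu> :: "nat \<Rightarrow> complex" and i :: nat
  define \<rho> where "\<rho> = max 1 (2 * real N ^ 2 * \<delta>)"
  assume P: "map_poly complex_of_real q = (\<Prod>i<N. [:- \<mu> i, 1:])"
    and T: "\<forall>k. 1 \<le> k \<and> k \<le> N * (N + 1) \<longrightarrow> Re (power_sum N \<mu> k) \<le> \<delta>"
  have b: "\<forall>i\<in>{..<N}. cmod (\<mu> i) \<le> \<rho>"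
    using roots_bounded[OF assms P T] by (simp add: \<rho>_def)
  have "\<bar>coeff q i\<bar> = cmod (coeff (map_poly complex_of_real q) i)"
    by (simp add: coeff_map_poly)
  also have "\<dots> \<le> (1 + \<rho>) ^ card {..<N}"
    unfolding P by (rule coeff_prod_bound) (use b in \<open>auto simp: \<rho>_def\<close>)
  finally show "\<bar>coeff q i\<bar> \<le> (1 + max 1 (2 * real N ^ 2 * \<delta>)) ^ N"
    by (simp add: \<rho>_def)
qed

end
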